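(* Let $0<\alpha<1$, let $\eta>0$ be sufficiently small, and let $\theta>0$. Let $B^2_{\eta/2}$ be the disk $$\{(x,Y^2):(x-\tfrac{3\eta}2)^2+(Y^2)^2\le(\tfrac\eta2)^2\}.$$ There exists a compactly supported function $\hat w\in H^{1/2}(\mathbb{R}^2)$ such that $$\hat w(x,Y^2)=\theta\int_{\mathbb{R}}\zeta_{\eta/10}(y)\,|\ln(x-y)|^\alpha\,\chi(x-y)\,dy\qquad\text{for }(x,Y^2)\in B^2_{\eta/2},$$ and $$\|\hat w\|_{\dot H^{1/2}(\mathbb{R}^2)}\lesssim\theta\,\eta^{1/4}\big(1+|\ln\tfrac{6\eta}5|^\alpha+|\ln\tfrac{9\eta}5|^\alpha\big),$$ where the implicit constant is independent of $\eta$ and $\theta$.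
   Context: $\chi$ is the indicator function of the interval $[\tfrac65\eta,\tfrac95\eta]$. $\zeta_{\eta/10}\in C_c^\infty(\mathbb{R})$ is a function with support in $\{|x|\le\eta/10\}$, satisfying $0\le\zeta_{\eta/10}\le 20/\eta$ and $\int_{\mathbb{R}}\zeta_{\eta/10}=1$. *)

theory Defs
  imports "HOL-Analysis.Analysis"
begin

definition smooth_real :: "(real \<Rightarrow> real) \<Rightarrow> bool" where
  "smooth_real f \<longleftrightarrow> (\<forall>n x. ((deriv ^^ n) f) differentiable (at x))"

text \<open>Squared Gagliardo seminorm of order s = 1/2 on R^2 (points are real \<times> real with the
  Euclidean distance): the double integral of |u p - u q|^2 / |p - q|^(2 + 2s), with 2 + 2s = 3.\<close>
definition gagliardo_half_sq :: "(real \<times> real \<Rightarrow> real) \<Rightarrow> ennreal" where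
  "gagliardo_half_sq u =
     (\<integral>\<^sup>+ p. (\<integral>\<^sup>+ q. ennreal ((u p - u q)^2 / (dist p q) ^ 3) \<partial>lborel) \<partial>lborel)"

definition Hdot_half_norm :: "(real \<times> real \<Rightarrow> real) \<Rightarrow> real" where
  "Hdot_half_norm u = sqrt (enn2real (gagliardo_half_sq u))"

definition H_half :: "(real \<times> real \<Rightarrow> real) set" where
  "H_half = {u. u \<in> borel_measurable lborel \<and> integrable lborel (\<lambda>p. (u p)^2)
                 \<and> gagliardo_half_sq u < \<infinity>}"

end

theory Submission
  imports Defs
begin


lemma tail_int:
  fixes B r :: real assumes "B > 0" "r > 0"
  shows "(\<integral>\<^sup>+t. ennreal (indicator {r..} t * (B * t powr (-2))) \<partial>lborel) = ennreal (B / r)"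
proof -
  have "((\<lambda>x. x powr (-2)) has_integral -(r powr (-2+1)) / (-2+1)) {r..}"
    by (rule has_integral_powr_to_inf) (use assms in auto)
  hence "((\<lambda>x. B * x powr (-2)) has_integral B * (-(r powr (-2+1)) / (-2+1))) {r..}"
    by (rule has_integral_mult_right)
  moreover have "B * (-(r powr (-2+1)) / (-2+1)) = B / r"
    using assms by (simp add: powr_minus_divide)
  ultimately have "((\<lambda>x. B * x powr (-2)) has_integral B / r) {r..}" by metis
  from nn_integral_has_integral_lebesgue[OF _ this] assms show ?thesis by auto
qed

lemma one_d:
  fixes A B :: real assumes A: "A > 0" and B: "B > 0"
  shows "(\<integral>\<^sup>+t. ennreal (min A (B / t^2)) \<partial>lborel) \<le> ennreal (4 * sqrt (A * B))"
proof -
  define r where "r = sqrt (B / A)"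
  have r: "r > 0" using A B by (simp add: r_def)
  have pt: "ennreal (min A (B / t^2)) \<le> ennreal (A * indicator {-r..r} t)
      + ennreal (indicator {r..} t * (B * t powr (-2)))
      + ennreal (indicator {r..} (-t) * (B * (-t) powr (-2)))" for t
  proof (cases "\<bar>t\<bar> \<le> r")
    case True thus ?thesis using A B
      by (auto simp: indicator_def intro!: add_increasing2 ennreal_leI)
  next
    case False
    hence "t > r \<or> t < -r" by auto
    thus ?thesis
    proof
      assume "t > r"
      hence "min A (B/t^2) \<le> indicator {r..} t * (B * t powr (-2))"
        using r by (simp add: powr_minus_divide powr_realpow divide_inverse)
      hence "ennreal (min A (B/t^2)) \<le> ennreal (indicator {r..} t * (B * t powr (-2)))"
        by (rule ennreal_leI)
      also have "\<dots> \<le> ennreal (A * indicator {-r..r} t) + ennreal (indicator {r..} t * (B * t powr (-2)))"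
        by (rule add_increasing) auto
      also have "\<dots> \<le> ennreal (A * indicator {-r..r} t) + ennreal (indicator {r..} t * (B * t powr (-2)))
      + ennreal (indicator {r..} (-t) * (B * (-t) powr (-2)))"
        by (rule add_increasing2) auto
      finally show ?thesis .
    next
      assume "t < -r"
      hence "min A (B/t^2) \<le> indicator {r..} (-t) * (B * (-t) powr (-2))"
        using r by (simp add: powr_minus_divide powr_realpow divide_inverse)
      thus ?thesis
        by (auto intro!: add_increasing ennreal_leI)
    qed
  qed
  have "(\<integral>\<^sup>+t. ennreal (min A (B / t^2)) \<partial>lborel) \<le>
     (\<integral>\<^sup>+t. ennreal (A * indicator {-r..r} t)
      + ennreal (indicator {r..} t * (B * t powr (-2)))
      + ennreal (indicator {r..} (-t) * (B * (-t) powr (-2))) \<partial>lborel)"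
    by (rule nn_integral_mono) (rule pt)
  also have "\<dots> = (\<integral>\<^sup>+t. ennreal (A * indicator {-r..r} t) \<partial>lborel)
      + (\<integral>\<^sup>+t. ennreal (indicator {r..} t * (B * t powr (-2))) \<partial>lborel)
      + (\<integral>\<^sup>+t. ennreal (indicator {r..} (-t) * (B * (-t) powr (-2))) \<partial>lborel)"
    by (subst nn_integral_add; (subst nn_integral_add)?) auto
  also have "(\<integral>\<^sup>+t. ennreal (indicator {r..} (-t) * (B * (-t) powr (-2))) \<partial>lborel)
      = (\<integral>\<^sup>+t. ennreal (indicator {r..} t * (B * t powr (-2))) \<partial>lborel)"
    using nn_integral_real_affine[of "\<lambda>t. ennreal (indicator {r..} t * (B * t powr (-2)))" "-1" 0]
    by simp
  also have "(\<integral>\<^sup>+t. ennreal (indicator {r..} t * (B * t powr (-2))) \<partial>lborel) = ennreal (B / r)"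
    by (rule tail_int[OF B r])
  also have "(\<integral>\<^sup>+t. ennreal (A * indicator {-r..r} t) \<partial>lborel) = ennreal (A * (2*r))"
  proof -
    have "(\<integral>\<^sup>+t. ennreal (A * indicator {-r..r} t) \<partial>lborel) = (\<integral>\<^sup>+t. ennreal A * indicator {-r..r} t \<partial>lborel)"
      by (intro nn_integral_cong) (auto simp: indicator_def)
    also have "\<dots> = ennreal A * emeasure lborel {-r..r}"
      by (simp add: nn_integral_cmult_indicator)
    also have "\<dots> = ennreal (A * (2*r))" using r A by (simp add: ennreal_mult)
    finally show ?thesis .
  qed
  also have "ennreal (A * (2*r)) + ennreal (B / r) + ennreal (B / r) = ennreal (4 * sqrt (A * B))"
  proof -
    have e1: "A * r = sqrt (A*B)" unfolding r_def using A B
      by (simp add: real_sqrt_divide real_sqrt_mult field_simps)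
    have e2: "B / r = sqrt (A*B)" unfolding r_def using A B
      by (simp add: real_sqrt_divide real_sqrt_mult field_simps)
    show ?thesis using A B r e1 e2 by (simp flip: ennreal_plus)
  qed
  finally show ?thesis .
qed


definition HH :: "real \<Rightarrow> real \<Rightarrow> real \<times> real \<Rightarrow> real" where
  "HH K L z = min (L^2 / norm z) (4*K^2 / (norm z)^3)"

definition phi :: "real \<Rightarrow> real \<Rightarrow> real \<Rightarrow> real" where
  "phi K L x = min (L^2 / \<bar>x\<bar>) (4*K^2 / \<bar>x\<bar>^3)"

lemma HH_meas[measurable]: "HH K L \<in> borel_measurable borel"
  unfolding HH_def by measurable

lemma phi_meas[measurable]: "phi K L \<in> borel_measurable borel"
  unfolding phi_def by measurable

lemma half_int:
  assumes K: "K > 0" and L: "L > 0"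
  shows "(\<integral>\<^sup>+x. \<integral>\<^sup>+y. ennreal ((if \<bar>y\<bar> \<le> \<bar>x\<bar> then phi K L x else 0)) \<partial>lborel \<partial>lborel) \<le> ennreal (16*K*L)"
proof -
  have "(\<integral>\<^sup>+y. ennreal ((if \<bar>y\<bar> \<le> \<bar>x\<bar> then phi K L x else 0)) \<partial>lborel)
        = ennreal (2 * min (L^2) (4*K^2 / x^2))" for x
  proof -
    have ph: "phi K L x \<ge> 0" unfolding phi_def by auto
    have "(\<integral>\<^sup>+y. ennreal ((if \<bar>y\<bar> \<le> \<bar>x\<bar> then phi K L x else 0)) \<partial>lborel)
       = (\<integral>\<^sup>+y. ennreal (phi K L x) * indicator {-\<bar>x\<bar>..\<bar>x\<bar>} y \<partial>lborel)"
      by (intro nn_integral_cong) (auto simp: indicator_def)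
    also have "\<dots> = ennreal (phi K L x) * ennreal (2*\<bar>x\<bar>)"
      by (simp add: nn_integral_cmult_indicator)
    also have "\<dots> = ennreal (phi K L x * (2*\<bar>x\<bar>))" using ph by (simp add: ennreal_mult)
    also have "phi K L x * (2*\<bar>x\<bar>) = 2 * min (L^2) (4*K^2 / x^2)"
    proof (cases "x = 0")
      case True thus ?thesis by (simp add: phi_def)
    next
      case False
      hence "phi K L x * \<bar>x\<bar> = min (L^2) (4*K^2 / x^2)"
        unfolding phi_def min_mult_distrib_right[symmetric]
        by (subst min_mult_distrib_right) (auto simp: power2_eq_square power3_eq_cube)
      thus ?thesis by simp
    qed
    finally show ?thesis .
  qed
  hence "(\<integral>\<^sup>+x. \<integral>\<^sup>+y. ennreal ((if \<bar>y\<bar> \<le> \<bar>x\<bar> then phi K L x else 0)) \<partial>lborel \<partial>lborel)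
      = (\<integral>\<^sup>+x. ennreal 2 * ennreal (min (L^2) (4*K^2 / x^2)) \<partial>lborel)"
    by (simp add: ennreal_mult)
  also have "\<dots> = ennreal 2 * (\<integral>\<^sup>+x. ennreal (min (L^2) (4*K^2 / x^2)) \<partial>lborel)"
    by (rule nn_integral_cmult) measurable
  also have "\<dots> \<le> ennreal 2 * ennreal (4 * sqrt (L^2 * (4*K^2)))"
    by (intro mult_left_mono one_d) (use K L in auto)
  also have "sqrt (L^2 * (4*K^2)) = 2*K*L" using K L
    by (simp add: real_sqrt_mult)
  also have "ennreal 2 * ennreal (4 * (2*K*L)) = ennreal (16*K*L)"
    using K L by (subst ennreal_mult[symmetric]) (auto simp: algebra_simps)
  finally show ?thesis .
qed

lemma HH_pt:
  assumes K: "K > 0" and L: "L > 0" and xy: "\<bar>y\<bar> \<le> \<bar>x\<bar>"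
  shows "HH K L (x,y) \<le> phi K L x"
proof (cases "x = 0")
  case True thus ?thesis using xy by (simp add: HH_def phi_def)
next
  case False
  have n: "norm (x,y) \<ge> \<bar>x\<bar>" by (simp add: norm_Pair real_sqrt_ge_abs1)
  have x: "\<bar>x\<bar> > 0" using False by simp
  have n0: "norm (x,y) > 0" using n x by linarith
  have 1: "L^2 / norm (x,y) \<le> L^2 / \<bar>x\<bar>"
    by (rule divide_left_mono) (use n x n0 in auto)
  have 2: "4*K^2 / norm (x,y)^3 \<le> 4*K^2 / \<bar>x\<bar>^3"
    by (rule divide_left_mono) (use n x n0 in \<open>auto intro!: power_mono\<close>)
  show ?thesis unfolding HH_def phi_def using 1 2 by linarith
qed

lemma HH_nonneg: "HH K L z \<ge> 0" unfolding HH_def by auto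
lemma phi_nonneg: "phi K L z \<ge> 0" unfolding phi_def by auto

lemma int_prod: "(\<integral>\<^sup>+z. f z \<partial>(lborel::(real\<times>real) measure)) = (\<integral>\<^sup>+x. \<integral>\<^sup>+y. f (x,y) \<partial>lborel \<partial>lborel)"
  if [measurable]: "f \<in> borel_measurable borel"
  by (subst lborel_prod[symmetric], subst lborel.nn_integral_fst) (auto simp: lborel_prod)

lemma two_d:
  assumes K: "K > 0" and L: "L > 0"
  shows "(\<integral>\<^sup>+z. ennreal (HH K L z) \<partial>lborel) \<le> ennreal (32*K*L)"
proof -
  have pt: "ennreal (HH K L (x,y)) \<le> ennreal ((if \<bar>y\<bar> \<le> \<bar>x\<bar> then phi K L x else 0))
     + ennreal ((if \<bar>x\<bar> \<le> \<bar>y\<bar> then phi K L y else 0))" for x y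
  proof (cases "\<bar>y\<bar> \<le> \<bar>x\<bar>")
    case True
    hence "HH K L (x,y) \<le> (if \<bar>y\<bar> \<le> \<bar>x\<bar> then phi K L x else 0) + (if \<bar>x\<bar> \<le> \<bar>y\<bar> then phi K L y else 0)"
      using HH_pt[OF K L True] phi_nonneg[of K L y]
      by (auto simp: indicator_def)
    thus ?thesis using phi_nonneg[of K L] by (simp add: ennreal_plus[symmetric] del: ennreal_plus)
  next
    case False
    hence F: "\<bar>x\<bar> \<le> \<bar>y\<bar>" by simp
    have "HH K L (x,y) = HH K L (y,x)" by (simp add: HH_def norm_Pair add.commute)
    also have "\<dots> \<le> phi K L y" by (rule HH_pt[OF K L F])
    finally have "HH K L (x,y) \<le> (if \<bar>y\<bar> \<le> \<bar>x\<bar> then phi K L x else 0) + (if \<bar>x\<bar> \<le> \<bar>y\<bar> then phi K L y else 0)"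
      using F phi_nonneg[of K L x]
      by (auto simp: indicator_def)
    thus ?thesis using phi_nonneg[of K L] by (simp add: ennreal_plus[symmetric] del: ennreal_plus)
  qed
  have "(\<integral>\<^sup>+z. ennreal (HH K L z) \<partial>lborel) = (\<integral>\<^sup>+x. \<integral>\<^sup>+y. ennreal (HH K L (x,y)) \<partial>lborel \<partial>lborel)"
    by (rule int_prod) measurable
  also have "\<dots> \<le> (\<integral>\<^sup>+x. \<integral>\<^sup>+y. ennreal ((if \<bar>y\<bar> \<le> \<bar>x\<bar> then phi K L x else 0))
     + ennreal ((if \<bar>x\<bar> \<le> \<bar>y\<bar> then phi K L y else 0)) \<partial>lborel \<partial>lborel)"
    by (intro nn_integral_mono pt)
  also have "\<dots> = (\<integral>\<^sup>+x. \<integral>\<^sup>+y. ennreal ((if \<bar>y\<bar> \<le> \<bar>x\<bar> then phi K L x else 0)) \<partial>lborel \<partial>lborel)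
     + (\<integral>\<^sup>+x. \<integral>\<^sup>+y. ennreal ((if \<bar>x\<bar> \<le> \<bar>y\<bar> then phi K L y else 0)) \<partial>lborel \<partial>lborel)"
    by (subst nn_integral_add[symmetric]; (measurable)?) (auto intro!: nn_integral_cong nn_integral_add)
  also have "(\<integral>\<^sup>+x. \<integral>\<^sup>+y. ennreal ((if \<bar>x\<bar> \<le> \<bar>y\<bar> then phi K L y else 0)) \<partial>lborel \<partial>lborel)
     = (\<integral>\<^sup>+y. \<integral>\<^sup>+x. ennreal ((if \<bar>x\<bar> \<le> \<bar>y\<bar> then phi K L y else 0)) \<partial>lborel \<partial>lborel)"
    by (rule lborel_pair.Fubini'[symmetric]) measurable
  finally have A: "(\<integral>\<^sup>+z. ennreal (HH K L z) \<partial>lborel) \<le> (\<integral>\<^sup>+x. \<integral>\<^sup>+y. ennreal (if \<bar>y\<bar> \<le> \<bar>x\<bar> then phi K L x else 0) \<partial>lborel \<partial>lborel)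
     + (\<integral>\<^sup>+y. \<integral>\<^sup>+x. ennreal (if \<bar>x\<bar> \<le> \<bar>y\<bar> then phi K L y else 0) \<partial>lborel \<partial>lborel)" .
  have h1: "(\<integral>\<^sup>+y. \<integral>\<^sup>+x. ennreal (if \<bar>x\<bar> \<le> \<bar>y\<bar> then phi K L y else 0) \<partial>lborel \<partial>lborel) \<le> ennreal (16*K*L)"
    by (rule half_int[OF K L])
  have h2: "(\<integral>\<^sup>+x. \<integral>\<^sup>+y. ennreal (if \<bar>y\<bar> \<le> \<bar>x\<bar> then phi K L x else 0) \<partial>lborel \<partial>lborel) \<le> ennreal (16*K*L)"
    by (rule half_int[OF K L])
  have "ennreal (16*K*L) + ennreal (16*K*L) = ennreal (32*K*L)"
    using K L by (simp add: ennreal_plus[symmetric] del: ennreal_plus)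
  with A add_mono[OF h2 h1] show ?thesis by simp
qed



lemma HH_minus: "HH K L (-z) = HH K L z" by (simp add: HH_def)

lemma HH_translate:
  "(\<integral>\<^sup>+q. ennreal (HH K L (p - q)) \<partial>lborel) = (\<integral>\<^sup>+z. ennreal (HH K L z) \<partial>lborel)"
proof -
  have "(\<integral>\<^sup>+z. ennreal (HH K L z) \<partial>lborel) = (\<integral>\<^sup>+z. ennreal (HH K L z) \<partial>(distr lborel borel ((+) (-p))))"
    by (simp add: lborel_distr_plus)
  also have "\<dots> = (\<integral>\<^sup>+q. ennreal (HH K L (-p + q)) \<partial>lborel)"
    by (subst nn_integral_distr) auto
  also have "\<dots> = (\<integral>\<^sup>+q. ennreal (HH K L (p - q)) \<partial>lborel)"
    using HH_minus[of K L "p - q" for q] by (intro nn_integral_cong) simp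
  finally show ?thesis ..
qed

lemma gag_bound:
  fixes u :: "real \<times> real \<Rightarrow> real" and S :: "(real \<times> real) set"
  assumes K: "K > 0" and L: "L > 0" and bnd: "\<And>p. \<bar>u p\<bar> \<le> K"
    and lip: "\<And>p q. \<bar>u p - u q\<bar> \<le> L * dist p q"
    and supp: "\<And>p. p \<notin> S \<Longrightarrow> u p = 0"
    and S[measurable]: "S \<in> sets borel" and mS: "emeasure lborel S \<le> ennreal m" and m: "m \<ge> 0"
  shows "gagliardo_half_sq u \<le> ennreal (64*m*K*L)"
proof -
  have pt1: "(u p - u q)^2 / (dist p q)^3 \<le> HH K L (p - q)" for p q
  proof (cases "dist p q = 0")
    case True thus ?thesis by (simp add: HH_def)
  next
    case False
    hence d: "dist p q > 0" by simp
    have a: "(u p - u q)^2 \<le> (L * dist p q)^2"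
      using lip[of p q] by (metis abs_ge_zero power2_abs power_mono)
    have b: "(u p - u q)^2 \<le> (2*K)^2"
    proof -
      have "\<bar>u p - u q\<bar> \<le> 2*K" using bnd[of p] bnd[of q] by linarith
      thus ?thesis by (metis abs_ge_zero power2_abs power_mono)
    qed
    have "(u p - u q)^2 / (dist p q)^3 \<le> (L * dist p q)^2 / (dist p q)^3"
      using a d by (simp add: divide_right_mono)
    also have "\<dots> = L^2 / dist p q" using d by (simp add: power2_eq_square power3_eq_cube)
    finally have 1: "(u p - u q)^2 / (dist p q)^3 \<le> L^2 / dist p q" .
    have 2: "(u p - u q)^2 / (dist p q)^3 \<le> 4*K^2 / (dist p q)^3"
      using b d by (simp add: divide_right_mono power_mult_distrib)
    show ?thesis using 1 2 by (simp add: HH_def dist_norm)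
  qed
  have pt: "ennreal ((u p - u q)^2 / (dist p q)^3) \<le>
      ennreal (indicator S p * HH K L (p - q)) + ennreal (indicator S q * HH K L (p - q))" for p q
  proof (cases "p \<in> S \<or> q \<in> S")
    case True
    hence "(u p - u q)^2 / (dist p q)^3 \<le> indicator S p * HH K L (p - q) + indicator S q * HH K L (p - q)"
      using pt1[of p q] HH_nonneg[of K L "p - q"] by (auto simp: indicator_def)
    thus ?thesis using HH_nonneg[of K L "p - q"]
      by (simp add: ennreal_plus[symmetric] del: ennreal_plus)
  next
    case False thus ?thesis using supp[of p] supp[of q] by simp
  qed
  define I where "I = (\<integral>\<^sup>+z. ennreal (HH K L z) \<partial>lborel)"
  have I: "I \<le> ennreal (32*K*L)" unfolding I_def by (rule two_d[OF K L])
  have "gagliardo_half_sq u \<le> (\<integral>\<^sup>+ p. (\<integral>\<^sup>+ q. ennreal (indicator S p * HH K L (p - q))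
        + ennreal (indicator S q * HH K L (p - q)) \<partial>lborel) \<partial>lborel)"
    unfolding gagliardo_half_sq_def by (intro nn_integral_mono pt)
  also have "\<dots> = (\<integral>\<^sup>+ p. (\<integral>\<^sup>+ q. ennreal (indicator S p * HH K L (p - q)) \<partial>lborel) \<partial>lborel)
      + (\<integral>\<^sup>+ p. (\<integral>\<^sup>+ q. ennreal (indicator S q * HH K L (p - q)) \<partial>lborel) \<partial>lborel)"
    by (subst nn_integral_add[symmetric]; (measurable)?) (auto intro!: nn_integral_cong nn_integral_add)
  also have "(\<integral>\<^sup>+ p. (\<integral>\<^sup>+ q. ennreal (indicator S q * HH K L (p - q)) \<partial>lborel) \<partial>lborel)
     = (\<integral>\<^sup>+ q. (\<integral>\<^sup>+ p. ennreal (indicator S q * HH K L (p - q)) \<partial>lborel) \<partial>lborel)"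
    by (rule lborel_pair.Fubini'[symmetric]) measurable
  also have "\<dots> = (\<integral>\<^sup>+ q. I * indicator S q \<partial>lborel)"
  proof (intro nn_integral_cong)
    fix q :: "real \<times> real"
    have "(\<integral>\<^sup>+ p. ennreal (indicator S q * HH K L (p - q)) \<partial>lborel)
       = (\<integral>\<^sup>+ p. indicator S q * ennreal (HH K L (q - p)) \<partial>lborel)"
      by (intro nn_integral_cong) (auto simp: indicator_def HH_minus[of K L "p - q" for p, symmetric])
    also have "\<dots> = indicator S q * I"
      by (subst nn_integral_cmult) (auto simp: HH_translate I_def)
    finally show "(\<integral>\<^sup>+ p. ennreal (indicator S q * HH K L (p - q)) \<partial>lborel) = I * indicator S q"
      by (simp add: mult.commute)
  qed
  also have "(\<integral>\<^sup>+ p. (\<integral>\<^sup>+ q. ennreal (indicator S p * HH K L (p - q)) \<partial>lborel) \<partial>lborel)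
      = (\<integral>\<^sup>+ p. I * indicator S p \<partial>lborel)"
  proof (intro nn_integral_cong)
    fix p :: "real \<times> real"
    have "(\<integral>\<^sup>+ q. ennreal (indicator S p * HH K L (p - q)) \<partial>lborel)
       = (\<integral>\<^sup>+ q. indicator S p * ennreal (HH K L (p - q)) \<partial>lborel)"
      by (intro nn_integral_cong) (auto simp: indicator_def)
    also have "\<dots> = indicator S p * I"
      by (subst nn_integral_cmult) (auto simp: HH_translate I_def)
    finally show "(\<integral>\<^sup>+ q. ennreal (indicator S p * HH K L (p - q)) \<partial>lborel) = I * indicator S p"
      by (simp add: mult.commute)
  qed
  also have "(\<integral>\<^sup>+ p. I * indicator S p \<partial>lborel) = I * emeasure lborel S"
    by (simp add: nn_integral_cmult_indicator)
  finally have G: "gagliardo_half_sq u \<le> I * emeasure lborel S + I * emeasure lborel S" .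
  have "I * emeasure lborel S \<le> ennreal (32*K*L) * ennreal m"
    by (intro mult_mono I mS) auto
  also have "\<dots> = ennreal (32*K*L*m)" using K L m by (simp add: ennreal_mult)
  finally have "I * emeasure lborel S + I * emeasure lborel S \<le> ennreal (32*K*L*m) + ennreal (32*K*L*m)"
    by (intro add_mono)
  also have "\<dots> = ennreal (64*m*K*L)" using K L m
    by (simp add: ennreal_plus[symmetric] del: ennreal_plus)
  finally show ?thesis using G by simp
qed


lemma pw_lemma:
  fixes u v \<alpha> :: real assumes "1 \<le> v" "v \<le> u" "0 < \<alpha>" "\<alpha> < 1"
  shows "u powr \<alpha> - v powr \<alpha> \<le> u - v"
proof -
  have v0: "v > 0" using assms by simp
  have q: "u / v \<ge> 1" using assms by simp
  have "u powr \<alpha> = v powr \<alpha> * (u/v) powr \<alpha>" using assms v0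
    by (simp add: powr_divide)
  also have "(u/v) powr \<alpha> \<le> u/v" using powr_mono[of \<alpha> 1 "u/v"] q assms by simp
  hence "v powr \<alpha> * (u/v) powr \<alpha> \<le> v powr \<alpha> * (u/v)" by (intro mult_left_mono) auto
  finally have 1: "u powr \<alpha> - v powr \<alpha> \<le> v powr \<alpha> * (u/v - 1)" by (simp add: algebra_simps)
  have "v powr \<alpha> \<le> v powr 1" by (rule powr_mono) (use assms in auto)
  hence "v powr \<alpha> * (u/v - 1) \<le> v * (u/v - 1)" using q v0 by (intro mult_right_mono) auto
  also have "\<dots> = u - v" using v0 by (simp add: field_simps)
  finally show ?thesis using 1 by linarith
qed

lemma ln_diff_le:
  fixes a s t :: real assumes "0 < a" "a \<le> s" "s \<le> t"
  shows "ln t - ln s \<le> (t - s) / a"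
proof -
  have s0: "s > 0" using assms by simp
  have "ln t - ln s = ln (t / s)" using assms s0 by (simp add: ln_div)
  also have "\<dots> \<le> t / s - 1" by (rule ln_le_minus_one) (use assms s0 in auto)
  also have "\<dots> = (t - s) / s" using s0 by (simp add: field_simps)
  also have "\<dots> \<le> (t - s) / a" using assms by (intro divide_left_mono) auto
  finally show ?thesis .
qed

lemma ln_le_m1: fixes t :: real assumes "0 < t" "t \<le> 1/3" shows "ln t \<le> -1"
proof -
  have "ln t \<le> ln (1/3)" using assms by simp
  also have "ln (1/3::real) = - ln 3" by (simp add: ln_div)
  also have "ln (3::real) \<ge> 1" using exp_le by (simp add: ln_ge_iff)
  hence "- ln (3::real) \<le> -1" by simp
  finally show ?thesis .
qed

lemma G_bound:
  fixes a t \<alpha> :: real assumes "0 < a" "a \<le> t" "t \<le> 1/3" "0 < \<alpha>"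
  shows "0 \<le> \<bar>ln t\<bar> powr \<alpha> \<and> \<bar>ln t\<bar> powr \<alpha> \<le> \<bar>ln a\<bar> powr \<alpha>"
proof -
  have "ln t \<le> -1" using ln_le_m1 assms by simp
  moreover have "ln a \<le> ln t" using assms by simp
  ultimately have "\<bar>ln t\<bar> \<le> \<bar>ln a\<bar>" by simp
  thus ?thesis using assms by (auto intro!: powr_mono2)
qed

lemma G_lip:
  fixes a s t \<alpha> :: real assumes "0 < a" "a \<le> s" "s \<le> t" "t \<le> 1/3" "0 < \<alpha>" "\<alpha> < 1"
  shows "\<bar>\<bar>ln s\<bar> powr \<alpha> - \<bar>ln t\<bar> powr \<alpha>\<bar> \<le> (t - s) / a"
proof -
  have lt: "ln t \<le> -1" using ln_le_m1 assms by simp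
  have ls: "ln s \<le> ln t" using assms by simp
  have "\<bar>ln s\<bar> powr \<alpha> - \<bar>ln t\<bar> powr \<alpha> \<le> \<bar>ln s\<bar> - \<bar>ln t\<bar>"
    by (rule pw_lemma) (use lt ls assms in auto)
  also have "\<bar>ln s\<bar> - \<bar>ln t\<bar> = ln t - ln s" using lt ls by simp
  also have "\<dots> \<le> (t - s)/a" by (rule ln_diff_le) (use assms in auto)
  finally have 1: "\<bar>ln s\<bar> powr \<alpha> - \<bar>ln t\<bar> powr \<alpha> \<le> (t - s)/a" .
  have "\<bar>ln t\<bar> powr \<alpha> \<le> \<bar>ln s\<bar> powr \<alpha>"
    using lt ls assms by (auto intro!: powr_mono2)
  thus ?thesis using 1 by linarith
qed

lemma g_diff:
  fixes a b h t \<alpha> :: real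
  assumes "0 < a" "a \<le> b" "b \<le> 1/3" "0 < \<alpha>" "\<alpha> < 1" "0 \<le> h"
  defines "g \<equiv> \<lambda>t. \<bar>ln t\<bar> powr \<alpha> * indicator {a..b} t"
  shows "\<bar>g (t + h) - g t\<bar> \<le> (h/a) * indicator {a..b} t
     + \<bar>ln a\<bar> powr \<alpha> * (indicator {a-h..a} t + indicator {b-h..b} t)"
proof -
  note GB = G_bound[OF assms(1) _ _ assms(4)]
  have M0: "\<bar>ln a\<bar> powr \<alpha> \<ge> 0" by simp
  have ha: "0 \<le> h/a" using assms by simp
  consider "t \<in> {a..b}" "t+h \<in> {a..b}" | "t \<in> {a..b}" "t+h \<notin> {a..b}"
    | "t \<notin> {a..b}" "t+h \<in> {a..b}" | "t \<notin> {a..b}" "t+h \<notin> {a..b}" by blast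
  thus ?thesis
  proof cases
    case 1
    have "\<bar>g (t + h) - g t\<bar> = \<bar>\<bar>ln t\<bar> powr \<alpha> - \<bar>ln (t+h)\<bar> powr \<alpha>\<bar>"
      using 1 by (simp add: g_def)
    also have "\<dots> \<le> (t + h - t)/a" by (rule G_lip) (use 1 assms in auto)
    finally have A: "\<bar>g (t + h) - g t\<bar> \<le> (h/a) * indicator {a..b} t" using 1 by simp
    have "0 \<le> \<bar>ln a\<bar> powr \<alpha> * (indicator {a-h..a} t + indicator {b-h..b} t)"
      by (intro mult_nonneg_nonneg) auto
    thus ?thesis using A by linarith
  next
    case 2
    hence "t \<in> {b-h..b}" using assms by auto
    hence "\<bar>g (t + h) - g t\<bar> \<le> \<bar>ln a\<bar> powr \<alpha> * indicator {b-h..b} t"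
      using 2 GB[of t] assms by (auto simp: g_def)
    moreover have "0 \<le> (h/a) * indicator {a..b} t" using ha by (intro mult_nonneg_nonneg) auto
    moreover have "0 \<le> \<bar>ln a\<bar> powr \<alpha> * indicator {a-h..a} t" "0 \<le> \<bar>ln a\<bar> powr \<alpha> * indicator {b-h..b} t" by simp_all
    ultimately show ?thesis unfolding distrib_left by linarith
  next
    case 3
    hence "t \<in> {a-h..a}" using assms by auto
    hence "\<bar>g (t + h) - g t\<bar> \<le> \<bar>ln a\<bar> powr \<alpha> * indicator {a-h..a} t"
      using 3 GB[of "t+h"] assms by (auto simp: g_def)
    moreover have "0 \<le> (h/a) * indicator {a..b} t" using ha by (intro mult_nonneg_nonneg) auto
    moreover have "0 \<le> \<bar>ln a\<bar> powr \<alpha> * indicator {a-h..a} t" "0 \<le> \<bar>ln a\<bar> powr \<alpha> * indicator {b-h..b} t" by simp_all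
    ultimately show ?thesis unfolding distrib_left by linarith
  next
    case 4 thus ?thesis using M0 assms by (auto simp: g_def indicator_def)
  qed
qed



locale LA =
  fixes \<alpha> \<eta> :: real and \<zeta> :: "real \<Rightarrow> real"
  assumes \<alpha>0: "0 < \<alpha>" and \<alpha>1: "\<alpha> < 1" and \<eta>0: "0 < \<eta>" and \<eta>1: "\<eta> < 1/10"
  and \<zeta>b: "\<forall>y. 0 \<le> \<zeta> y \<and> \<zeta> y \<le> 20/\<eta>" and \<zeta>i: "integral\<^sup>L lborel \<zeta> = 1"
begin

definition "a = 6*\<eta>/5"
definition "b = 9*\<eta>/5"
definition "M = \<bar>ln a\<bar> powr \<alpha>"
definition "g t = \<bar>ln t\<bar> powr \<alpha> * indicator {a..b} t"
definition "f x = integral\<^sup>L lborel (\<lambda>y. \<zeta> y * \<bar>ln (x - y)\<bar> powr \<alpha> * indicator {a..b} (x - y))"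

lemma a0: "0 < a" and ab: "a \<le> b" and b3: "b \<le> 1/3"
  using \<eta>0 \<eta>1 by (auto simp: a_def b_def)

lemma M1: "M \<ge> 1"
proof -
  have "ln a \<le> -1" using ln_le_m1[of a] a0 ab b3 by simp
  hence "\<bar>ln a\<bar> \<ge> 1" by simp
  thus ?thesis unfolding M_def using \<alpha>0 by (metis ge_one_powr_ge_zero less_eq_real_def)
qed

lemma \<zeta>_int: "integrable lborel \<zeta>"
  using \<zeta>i not_integrable_integral_eq by fastforce

lemma \<zeta>_meas[measurable]: "\<zeta> \<in> borel_measurable lborel"
  using \<zeta>_int by auto

lemma \<zeta>_meas'[measurable]: "\<zeta> \<in> borel_measurable borel"
  using \<zeta>_meas by simp

lemma g_bnd: "0 \<le> g t \<and> g t \<le> M"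
proof (cases "t \<in> {a..b}")
  case True thus ?thesis using G_bound[OF a0 _ _ \<alpha>0, of t] b3 by (auto simp: g_def M_def)
next
  case False thus ?thesis using M1 by (auto simp: g_def)
qed

lemma g_meas[measurable]: "g \<in> borel_measurable borel"
  unfolding g_def by measurable

lemma integrand_eq: "\<zeta> y * \<bar>ln (x - y)\<bar> powr \<alpha> * indicator {a..b} (x - y) = \<zeta> y * g (x - y)"
  by (simp add: g_def)

lemma f_eq: "f x = integral\<^sup>L lborel (\<lambda>y. \<zeta> y * g (x - y))"
  unfolding f_def integrand_eq ..

lemma int_zg: "integrable lborel (\<lambda>y. \<zeta> y * g (x - y))"
proof -
  have 1: "integrable lborel (\<lambda>y. M * \<zeta> y)" using \<zeta>_int by simp
  have 2: "(\<lambda>y. \<zeta> y * g (x - y)) \<in> borel_measurable lborel" by measurable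
  have 3: "AE y in lborel. norm (\<zeta> y * g (x - y)) \<le> norm (M * \<zeta> y)"
    using \<zeta>b g_bnd[of "x - y" for y] M1
    by (auto intro!: AE_I2 simp: abs_mult mult.commute intro: mult_left_mono)
  show ?thesis by (rule Bochner_Integration.integrable_bound[OF 1 2 3])
qed

lemma f_bnd: "\<bar>f x\<bar> \<le> M"
proof -
  have "\<bar>f x\<bar> \<le> integral\<^sup>L lborel (\<lambda>y. M * \<zeta> y)"
    unfolding f_eq
    by (rule integral_abs_bound_integral[OF int_zg]) (use \<zeta>_int \<zeta>b g_bnd[of "x - y" for y] in \<open>auto simp: abs_mult mult.commute intro: mult_left_mono\<close>)
  also have "\<dots> = M" using \<zeta>i by simp
  finally show ?thesis .
qed

definition "Lf = (20/\<eta>) * (1/2 + 2*M)"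

lemma f_lip_aux:
  assumes "x' \<le> x" shows "\<bar>f x - f x'\<bar> \<le> Lf * (x - x')"
proof -
  define h where "h = x - x'"
  have h0: "h \<ge> 0" using assms by (simp add: h_def)
  define B where "B y = (20/\<eta>) * ((h/a) * indicator {x'-b..x'-a} y
      + M * (indicator {x'-a..x'-a+h} y + indicator {x'-b..x'-b+h} y))" for y
  have ind1: "indicator {a..b} (x' - y) = (indicator {x'-b..x'-a} y :: real)" for y
    by (auto simp: indicator_def)
  have ind2: "indicator {a-h..a} (x' - y) = (indicator {x'-a..x'-a+h} y :: real)" for y
    by (auto simp: indicator_def)
  have ind3: "indicator {b-h..b} (x' - y) = (indicator {x'-b..x'-b+h} y :: real)" for y
    by (auto simp: indicator_def)
  have pt: "\<bar>\<zeta> y * g (x - y) - \<zeta> y * g (x' - y)\<bar> \<le> B y" for y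
  proof -
    have xy: "x - y = (x' - y) + h" by (simp add: h_def)
    have gd: "\<bar>g ((x' - y) + h) - g (x' - y)\<bar> \<le> (h/a) * indicator {a..b} (x' - y)
     + M * (indicator {a-h..a} (x' - y) + indicator {b-h..b} (x' - y))"
      using g_diff[OF a0 ab b3 \<alpha>0 \<alpha>1 h0, of "x' - y"] unfolding g_def M_def .
    have R0: "0 \<le> (h/a) * indicator {a..b} (x' - y)
     + M * (indicator {a-h..a} (x' - y) + indicator {b-h..b} (x' - y))"
      using h0 a0 M1 by (intro add_nonneg_nonneg mult_nonneg_nonneg) auto
    have "\<bar>\<zeta> y * g (x - y) - \<zeta> y * g (x' - y)\<bar> = \<zeta> y * \<bar>g ((x' - y) + h) - g (x' - y)\<bar>"
      unfolding xy using \<zeta>b by (simp add: abs_mult right_diff_distrib[symmetric])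
    also have "\<dots> \<le> (20/\<eta>) * ((h/a) * indicator {a..b} (x' - y)
     + M * (indicator {a-h..a} (x' - y) + indicator {b-h..b} (x' - y)))"
      using \<zeta>b gd R0 \<eta>0 by (intro mult_mono) auto
    also have "\<dots> = B y" unfolding B_def ind1 ind2 ind3 ..
    finally show ?thesis .
  qed
  have I: "integrable lborel (indicator {c..d} :: real \<Rightarrow> real)" for c d
    by (rule integrable_real_indicator) (auto simp: emeasure_lborel_Icc_eq)
  have intB: "integrable lborel B"
  proof -
    have i1: "integrable lborel (\<lambda>y. (h/a) * indicator {x'-b..x'-a} y)"
      using I[of "x'-b" "x'-a"] by simp
    have i2: "integrable lborel (\<lambda>y. M * (indicator {x'-a..x'-a+h} y + indicator {x'-b..x'-b+h} y))"
      using I[of "x'-a" "x'-a+h"] I[of "x'-b" "x'-b+h"] by simp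
    note X = Bochner_Integration.integrable_add[OF i1 i2]
    show ?thesis unfolding B_def by (rule Bochner_Integration.integrable_mult_right) (rule X)
  qed
  have IB: "integral\<^sup>L lborel B = (20/\<eta>) * ((h/a) * (b - a) + M * (h + h))"
    unfolding B_def using ab h0 by (simp add: integral_add integral_mult_right)
  have "f x - f x' = integral\<^sup>L lborel (\<lambda>y. \<zeta> y * g (x - y) - \<zeta> y * g (x' - y))"
    unfolding f_eq by (rule Bochner_Integration.integral_diff[OF int_zg int_zg, symmetric])
  hence "\<bar>f x - f x'\<bar> \<le> integral\<^sup>L lborel B"
    using integral_abs_bound_integral[OF Bochner_Integration.integrable_diff[OF int_zg int_zg] intB] pt by simp
  also have "\<dots> = (20/\<eta>) * ((h/a) * (b - a) + M * (h + h))" by (rule IB)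
  also have "(h/a) * (b - a) = h/2" using \<eta>0 by (simp add: a_def b_def field_simps)
  also have "(20/\<eta>) * (h/2 + M * (h + h)) = Lf * (x - x')" using \<eta>0 by (simp add: Lf_def h_def field_simps)
  finally show ?thesis .
qed

lemma f_lip: "\<bar>f x - f x'\<bar> \<le> Lf * \<bar>x - x'\<bar>"
proof (cases "x' \<le> x")
  case True thus ?thesis using f_lip_aux[OF True] by simp
next
  case False thus ?thesis using f_lip_aux[of x x'] by (simp add: abs_minus_commute)
qed

end


lemma clamp_lip: "\<bar>max 0 (min 1 s) - max 0 (min 1 t)\<bar> \<le> \<bar>s - t\<bar>" for s t :: real
  by (auto simp: max_def min_def)

context LA begin

definition "cc = (3*\<eta>/2, 0::real)"
definition "psi p = max 0 (min 1 (2 - 2 * dist p cc / \<eta>))"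
definition "SS = {\<eta>/2..5*\<eta>/2} \<times> {-\<eta>..\<eta>}"

lemma psi01: "0 \<le> psi p" "psi p \<le> 1" unfolding psi_def by auto

lemma psi_lip: "\<bar>psi p - psi q\<bar> \<le> (2/\<eta>) * dist p q"
proof -
  have "\<bar>psi p - psi q\<bar> \<le> \<bar>(2 - 2 * dist p cc / \<eta>) - (2 - 2 * dist q cc / \<eta>)\<bar>"
    unfolding psi_def by (rule clamp_lip)
  also have "\<dots> = (2/\<eta>) * \<bar>dist p cc - dist q cc\<bar>"
  proof -
    have "(2 - 2 * dist p cc / \<eta>) - (2 - 2 * dist q cc / \<eta>) = (2/\<eta>)*(dist q cc - dist p cc)"
      using \<eta>0 by (simp add: field_simps)
    thus ?thesis using \<eta>0 by (simp add: abs_mult abs_minus_commute) (simp add: abs_if)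
  qed
  also have "\<dots> \<le> (2/\<eta>) * dist p q"
  proof -
    have "\<bar>dist p cc - dist q cc\<bar> \<le> dist p q"
      using dist_triangle[of p cc q] dist_triangle[of q cc p] by (simp add: dist_commute abs_le_iff)
    thus ?thesis using \<eta>0 by (intro mult_left_mono) auto
  qed
  finally show ?thesis .
qed

lemma dist_cc: "dist (x, Y) cc = sqrt ((x - 3*\<eta>/2)^2 + Y^2)"
  by (simp add: cc_def dist_Pair_Pair dist_real_def)

lemma psi_supp: "p \<notin> SS \<Longrightarrow> psi p = 0"
proof -
  assume p: "p \<notin> SS"
  obtain x Y where pe: "p = (x, Y)" by force
  have "\<bar>x - 3*\<eta>/2\<bar> > \<eta> \<or> \<bar>Y\<bar> > \<eta>" using p pe by (auto simp: SS_def)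
  hence "dist p cc \<ge> \<eta>"
  proof
    assume "\<bar>x - 3*\<eta>/2\<bar> > \<eta>"
    moreover have "\<bar>x - 3*\<eta>/2\<bar> \<le> dist p cc"
      unfolding pe dist_cc by (rule real_sqrt_ge_abs1)
    ultimately show ?thesis by simp
  next
    assume "\<bar>Y\<bar> > \<eta>"
    moreover have "\<bar>Y\<bar> \<le> dist p cc"
      unfolding pe dist_cc by (rule real_sqrt_ge_abs2)
    ultimately show ?thesis by simp
  qed
  hence "2 - 2 * dist p cc / \<eta> \<le> 0" using \<eta>0 by (simp add: field_simps)
  thus ?thesis unfolding psi_def by simp
qed

lemma psi_disk: "(x - 3*\<eta>/2)^2 + Y^2 \<le> (\<eta>/2)^2 \<Longrightarrow> psi (x, Y) = 1"
proof -
  assume h: "(x - 3*\<eta>/2)^2 + Y^2 \<le> (\<eta>/2)^2"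
  have "dist (x,Y) cc \<le> \<eta>/2" unfolding dist_cc
    using real_sqrt_le_mono[OF h] \<eta>0 by simp
  hence "2 - 2 * dist (x,Y) cc / \<eta> \<ge> 1" using \<eta>0 by (simp add: field_simps)
  thus ?thesis unfolding psi_def by simp
qed

definition "w \<theta> p = \<theta> * f (fst p) * psi p"

lemma w_bnd: "\<theta> > 0 \<Longrightarrow> \<bar>w \<theta> p\<bar> \<le> \<theta> * M"
proof -
  assume t: "\<theta> > 0"
  have "\<bar>f (fst p) * psi p\<bar> \<le> M * 1"
    unfolding abs_mult using f_bnd psi01[of p] M1 by (intro mult_mono) auto
  thus ?thesis using t unfolding w_def by (simp add: abs_mult mult.assoc mult_left_mono)
qed

lemma w_lip: "\<theta> > 0 \<Longrightarrow> \<bar>w \<theta> p - w \<theta> q\<bar> \<le> \<theta> * (Lf + 2*M/\<eta>) * dist p q"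
proof -
  assume t: "\<theta> > 0"
  have Lf0: "Lf \<ge> 0" using \<eta>0 M1 by (simp add: Lf_def)
  have d1: "\<bar>fst p - fst q\<bar> \<le> dist p q" using dist_fst_le[of p q] by (simp add: dist_real_def)
  have e: "f (fst p) * psi p - f (fst q) * psi q = (f (fst p) - f (fst q)) * psi p + f (fst q) * (psi p - psi q)"
    by (simp add: algebra_simps)
  have "\<bar>(f (fst p) - f (fst q)) * psi p\<bar> \<le> Lf * dist p q"
  proof -
    have "\<bar>(f (fst p) - f (fst q)) * psi p\<bar> \<le> (Lf * \<bar>fst p - fst q\<bar>) * 1"
      unfolding abs_mult using f_lip psi01[of p] Lf0 by (intro mult_mono) auto
    also have "\<dots> \<le> Lf * dist p q" using d1 Lf0 by (simp add: mult_left_mono)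
    finally show ?thesis .
  qed
  moreover have "\<bar>f (fst q) * (psi p - psi q)\<bar> \<le> M * ((2/\<eta>) * dist p q)"
    unfolding abs_mult using f_bnd psi_lip M1 by (intro mult_mono) auto
  ultimately have "\<bar>f (fst p) * psi p - f (fst q) * psi q\<bar> \<le> (Lf + 2*M/\<eta>) * dist p q"
    unfolding e by (simp add: algebra_simps)
  thus ?thesis using t unfolding w_def
    by (simp add: mult.assoc right_diff_distrib[symmetric] abs_mult mult_left_mono)
qed

lemma w_supp: "p \<notin> SS \<Longrightarrow> w \<theta> p = 0"
  by (simp add: w_def psi_supp)

lemma SS_meas: "SS \<in> sets borel"
  unfolding SS_def by (intro borel_closed closed_Times) auto

lemma SS_emeasure: "emeasure lborel SS = ennreal (4*\<eta>^2)"
proof -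
  have "emeasure lborel SS = emeasure (lborel \<Otimes>\<^sub>M lborel) ({\<eta>/2..5*\<eta>/2} \<times> {-\<eta>..\<eta>})"
    by (simp add: lborel_prod SS_def)
  also have "\<dots> = emeasure lborel {\<eta>/2..5*\<eta>/2} * emeasure lborel {-\<eta>..\<eta>}"
    by (rule lborel.emeasure_pair_measure_Times) auto
  also have "\<dots> = ennreal (2*\<eta>) * ennreal (2*\<eta>)" using \<eta>0 by simp
  also have "\<dots> = ennreal (4*\<eta>^2)" using \<eta>0 by (simp add: ennreal_mult[symmetric] power2_eq_square)
  finally show ?thesis .
qed

lemma w_gag: "\<theta> > 0 \<Longrightarrow> gagliardo_half_sq (w \<theta>) \<le> ennreal (256 * \<eta> * \<theta>^2 * M * (10 + 42*M))"
proof -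
  assume t: "\<theta> > 0"
  have "gagliardo_half_sq (w \<theta>) \<le> ennreal (64 * (4*\<eta>^2) * (\<theta>*M) * (\<theta> * (Lf + 2*M/\<eta>)))"
    by (rule gag_bound[OF _ _ w_bnd[OF t] w_lip[OF t] w_supp SS_meas])
       (use t M1 \<eta>0 in \<open>auto simp: SS_emeasure Lf_def intro!: mult_pos_pos add_pos_nonneg\<close>)
  also have "64 * (4*\<eta>^2) * (\<theta>*M) * (\<theta> * (Lf + 2*M/\<eta>)) = 256 * \<eta> * \<theta>^2 * M * (10 + 42*M)"
    using \<eta>0 by (simp add: Lf_def field_simps power2_eq_square)
  finally show ?thesis .
qed

end


context LA begin

lemma w_cont: "\<theta> > 0 \<Longrightarrow> continuous_on UNIV (w \<theta>)"
proof -
  assume t: "\<theta> > 0"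
  have "(\<theta> * (Lf + 2*M/\<eta>))-lipschitz_on UNIV (w \<theta>)"
    using w_lip[OF t] t \<eta>0 M1 by (intro lipschitz_onI) (auto simp: dist_real_def Lf_def)
  thus ?thesis by (rule lipschitz_on_continuous_on)
qed

lemma main:
  assumes t: "\<theta> > 0"
  shows "\<exists>w. w \<in> H_half \<and> compact (closure {p. w p \<noteq> 0}) \<and>
          (\<forall>x Y. (x - 3 * \<eta> / 2)^2 + Y^2 \<le> (\<eta> / 2)^2 \<longrightarrow>
             w (x, Y) = \<theta> * integral\<^sup>L lborel
               (\<lambda>y. \<zeta> y * \<bar>ln (x - y)\<bar> powr \<alpha> * indicator {6 * \<eta> / 5 .. 9 * \<eta> / 5} (x - y))) \<and>
          Hdot_half_norm w \<le> 104 * \<theta> * \<eta> powr (1/4) *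
             (1 + \<bar>ln (6 * \<eta> / 5)\<bar> powr \<alpha> + \<bar>ln (9 * \<eta> / 5)\<bar> powr \<alpha>)"
proof (intro exI conjI allI impI)
  define V where "V = 256 * \<eta> * \<theta>^2 * M * (10 + 42*M)"
  have V0: "V \<ge> 0" using \<eta>0 M1 by (simp add: V_def)
  have gag: "gagliardo_half_sq (w \<theta>) \<le> ennreal V" unfolding V_def by (rule w_gag[OF t])
  have meas: "w \<theta> \<in> borel_measurable lborel"
    using borel_measurable_continuous_onI[OF w_cont[OF t]] by simp
  have SSfin: "emeasure lborel SS < \<infinity>" by (simp add: SS_emeasure)
  have int2: "integrable lborel (\<lambda>p. (w \<theta> p)^2)"
  proof (rule Bochner_Integration.integrable_bound)
    show "integrable lborel (\<lambda>p. (\<theta>*M)^2 * indicator SS p)"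
      using SSfin SS_meas
      by (intro Bochner_Integration.integrable_mult_right integrable_real_indicator) auto
    show "(\<lambda>p. (w \<theta> p)^2) \<in> borel_measurable lborel" using meas by measurable
    show "AE p in lborel. norm ((w \<theta> p)^2) \<le> norm ((\<theta>*M)^2 * indicator SS p)"
    proof (intro AE_I2)
      fix p
      show "norm ((w \<theta> p)^2) \<le> norm ((\<theta>*M)^2 * indicator SS p)"
      proof (cases "p \<in> SS")
        case True
        have "(w \<theta> p)^2 \<le> (\<theta>*M)^2"
          using w_bnd[OF t, of p] by (metis abs_ge_zero power2_abs power_mono)
        thus ?thesis using True by simp
      next
        case False thus ?thesis using w_supp[of p \<theta>] by simp
      qed
    qed
  qed
  show "w \<theta> \<in> H_half" unfolding H_half_def
    using meas int2 gag by (auto simp: top_unique intro: le_less_trans)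
  have sub: "{p. w \<theta> p \<noteq> 0} \<subseteq> SS" using w_supp by blast
  have cS: "compact SS" unfolding SS_def by (intro compact_Times compact_Icc)
  have clS: "closure {p. w \<theta> p \<noteq> 0} \<subseteq> SS"
    by (rule closure_minimal[OF sub compact_imp_closed[OF cS]])
  show "compact (closure {p. w \<theta> p \<noteq> 0})"
    using compact_Int_closed[OF cS closed_closure, of "{p. w \<theta> p \<noteq> 0}"] clS
    by (simp add: Int_absorb1)
  fix x Y assume "(x - 3 * \<eta> / 2)^2 + Y^2 \<le> (\<eta> / 2)^2"
  from psi_disk[OF this] show "w \<theta> (x, Y) = \<theta> * integral\<^sup>L lborel
               (\<lambda>y. \<zeta> y * \<bar>ln (x - y)\<bar> powr \<alpha> * indicator {6 * \<eta> / 5 .. 9 * \<eta> / 5} (x - y))"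
    by (simp add: w_def f_def a_def b_def)
next
  define V where "V = 256 * \<eta> * \<theta>^2 * M * (10 + 42*M)"
  have V0: "V \<ge> 0" using \<eta>0 M1 by (simp add: V_def)
  have gag: "gagliardo_half_sq (w \<theta>) \<le> ennreal V" unfolding V_def by (rule w_gag[OF t])
  define W where "W = 104 * \<theta> * sqrt \<eta> * (1 + M)"
  have W0: "W \<ge> 0" using t \<eta>0 M1 by (simp add: W_def)
  have "Hdot_half_norm (w \<theta>) \<le> sqrt V"
    unfolding Hdot_half_norm_def by (rule real_sqrt_le_mono, rule enn2real_leI[OF V0 gag])
  also have "V \<le> W^2"
  proof -
    have "256 * M * (10 + 42*M) \<le> 10816 * (1 + M)^2" using M1 by (simp add: power2_eq_square algebra_simps)
    hence "(\<eta> * \<theta>^2) * (256 * M * (10 + 42*M)) \<le> (\<eta> * \<theta>^2) * (10816 * (1 + M)^2)"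
      using \<eta>0 by (intro mult_left_mono) auto
    moreover have "W^2 = (\<eta> * \<theta>^2) * (10816 * (1 + M)^2)"
      using \<eta>0 by (simp add: W_def power_mult_distrib)
    ultimately show ?thesis by (simp add: V_def algebra_simps)
  qed
  hence "sqrt V \<le> W" using W0 real_sqrt_le_mono[of V "W^2"] by simp
  also have "W \<le> 104 * \<theta> * \<eta> powr (1/4) * (1 + \<bar>ln (6 * \<eta> / 5)\<bar> powr \<alpha> + \<bar>ln (9 * \<eta> / 5)\<bar> powr \<alpha>)"
  proof -
    have "sqrt \<eta> = \<eta> powr (1/2)" using \<eta>0 by (simp add: powr_half_sqrt)
    also have "\<dots> \<le> \<eta> powr (1/4)" by (rule powr_mono') (use \<eta>0 \<eta>1 in auto)
    finally have s: "sqrt \<eta> \<le> \<eta> powr (1/4)" .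
    have m: "1 + M \<le> 1 + \<bar>ln (6 * \<eta> / 5)\<bar> powr \<alpha> + \<bar>ln (9 * \<eta> / 5)\<bar> powr \<alpha>"
      by (simp add: M_def a_def)
    show ?thesis unfolding W_def using t M1 s m \<eta>0
      by (intro mult_mono) auto
  qed
  finally show "Hdot_half_norm (w \<theta>) \<le> 104 * \<theta> * \<eta> powr (1/4) * (1 + \<bar>ln (6 * \<eta> / 5)\<bar> powr \<alpha> + \<bar>ln (9 * \<eta> / 5)\<bar> powr \<alpha>)" .
qed

end

theorem lemmaA2:
  fixes \<alpha> :: real
  assumes "0 < \<alpha>" and "\<alpha> < 1"
  shows "\<exists>C>0. \<exists>\<eta>0>0. \<forall>\<eta> \<theta> (\<zeta> :: real \<Rightarrow> real).
    0 < \<eta> \<and> \<eta> < \<eta>0 \<and> 0 < \<theta> \<and>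
    smooth_real \<zeta> \<and> (\<forall>y. \<bar>y\<bar> > \<eta> / 10 \<longrightarrow> \<zeta> y = 0) \<and>
    (\<forall>y. 0 \<le> \<zeta> y \<and> \<zeta> y \<le> 20 / \<eta>) \<and> integral\<^sup>L lborel \<zeta> = 1
    \<longrightarrow> (\<exists>w. w \<in> H_half \<and> compact (closure {p. w p \<noteq> 0}) \<and>
          (\<forall>x Y. (x - 3 * \<eta> / 2)^2 + Y^2 \<le> (\<eta> / 2)^2 \<longrightarrow>
             w (x, Y) = \<theta> * integral\<^sup>L lborel
               (\<lambda>y. \<zeta> y * \<bar>ln (x - y)\<bar> powr \<alpha> * indicator {6 * \<eta> / 5 .. 9 * \<eta> / 5} (x - y))) \<and>
          Hdot_half_norm w \<le> C * \<theta> * \<eta> powr (1/4) *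
             (1 + \<bar>ln (6 * \<eta> / 5)\<bar> powr \<alpha> + \<bar>ln (9 * \<eta> / 5)\<bar> powr \<alpha>))"
proof (rule exI[of _ 104], rule conjI, simp, rule exI[of _ "1/10"], rule conjI, simp, intro allI impI)
  fix \<eta> \<theta> :: real and \<zeta> :: "real \<Rightarrow> real"
  assume h: "0 < \<eta> \<and> \<eta> < 1/10 \<and> 0 < \<theta> \<and>
    smooth_real \<zeta> \<and> (\<forall>y. \<bar>y\<bar> > \<eta> / 10 \<longrightarrow> \<zeta> y = 0) \<and>
    (\<forall>y. 0 \<le> \<zeta> y \<and> \<zeta> y \<le> 20 / \<eta>) \<and> integral\<^sup>L lborel \<zeta> = 1"
  interpret LA \<alpha> \<eta> \<zeta> using assms h by unfold_locales auto
  show "\<exists>w. w \<in> H_half \<and> compact (closure {p. w p \<noteq> 0}) \<and>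
          (\<forall>x Y. (x - 3 * \<eta> / 2)^2 + Y^2 \<le> (\<eta> / 2)^2 \<longrightarrow>
             w (x, Y) = \<theta> * integral\<^sup>L lborel
               (\<lambda>y. \<zeta> y * \<bar>ln (x - y)\<bar> powr \<alpha> * indicator {6 * \<eta> / 5 .. 9 * \<eta> / 5} (x - y))) \<and>
          Hdot_half_norm w \<le> 104 * \<theta> * \<eta> powr (1/4) *
             (1 + \<bar>ln (6 * \<eta> / 5)\<bar> powr \<alpha> + \<bar>ln (9 * \<eta> / 5)\<bar> powr \<alpha>)"
    by (rule main) (use h in auto)
qed

end
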